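(* There are positive constants $c_1$ and $c_2$ such that the following holds. Let $n$ be even and let $N_n$ be the $n\times n$ random Bernoulli matrix. For any $L\ge n$, there is an $n\times n$ deterministic matrix $M$ such that $\|M\| = L$ and $$\mathbb{P}\Big(s_n(M+N_n)\le c_1\frac{n}{L}\Big)\ge c_2 n^{-1/2}.$$
   Context: The random Bernoulli matrix $N_n$ has independent entries, each taking the values $+1$ and $-1$ with probability $1/2$. $\|M\|$ denotes the operator norm (largest singular value) of $M$, and $s_n(X)$ denotes the smallest singular value of an $n\times n$ matrix $X$. *)

theory Defs
  imports "Jordan_Normal_Form.Char_Poly" "HOL-Probability.Probability"
begin

text \<open>Singular values of a real square matrix A are the square roots of the
  eigenvalues of the (positive semidefinite) Gram matrix A^T A.\<close>

definition gram_eigenvalues :: "real mat \<Rightarrow> real set" where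
  "gram_eigenvalues A = {k. eigenvalue (transpose_mat A * A) k}"

definition op_norm :: "real mat \<Rightarrow> real" where
  "op_norm A = sqrt (Max (gram_eigenvalues A))"

definition smallest_sv :: "real mat \<Rightarrow> real" where
  "smallest_sv A = sqrt (Min (gram_eigenvalues A))"

definition sign_mats :: "nat \<Rightarrow> real mat set" where
  "sign_mats n = {A \<in> carrier_mat n n. \<forall>i<n. \<forall>j<n. A $$ (i,j) = 1 \<or> A $$ (i,j) = -1}"

text \<open>Distribution of the random Bernoulli matrix N_n: independent uniform
  +-1 entries, i.e. the uniform distribution on sign_mats n.\<close>
definition bernoulli_matrix :: "nat \<Rightarrow> real mat pmf" where
  "bernoulli_matrix n = pmf_of_set (sign_mats n)"

end

theory Submission
  imports Defs
begin


definition Fq :: "real mat \<Rightarrow> nat \<Rightarrow> (nat \<Rightarrow> real) \<Rightarrow> real" where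
  "Fq A n f = (\<Sum>i\<in>{0..<n}. (\<Sum>j\<in>{0..<n}. A $$ (i,j) * f j)^2)"
definition Gq :: "nat \<Rightarrow> (nat \<Rightarrow> real) \<Rightarrow> real" where
  "Gq n f = (\<Sum>i\<in>{0..<n}. (f i)^2)"

lemma cont_Fq: "continuous_on S (Fq A n)"
  unfolding Fq_def
  by (intro continuous_intros continuous_on_product_then_coordinatewise continuous_on_id)

lemma cont_Gq: "continuous_on S (Gq n)"
  unfolding Gq_def
  by (intro continuous_intros continuous_on_product_then_coordinatewise continuous_on_id)

lemma compact_K: "compact ({f. \<forall>i. f i \<in> (if i < n then {-1..1} else {0::real})} \<inter> {f. Gq n f = 1})"
proof -
  have "compactin (product_topology (\<lambda>i. euclidean) UNIV) (PiE UNIV (\<lambda>i. if i < n then {-1..1} else {0::real}))"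
    by (subst compactin_PiE) auto
  then have c: "compact (PiE UNIV (\<lambda>i. if i < n then {-1..1} else {0::real}))"
    by (simp add: euclidean_product_topology)
  have e: "PiE UNIV (\<lambda>i. if i < n then {-1..1} else {0::real}) = {f. \<forall>i. f i \<in> (if i < n then {-1..1} else {0::real})}"
    by (auto simp: PiE_def Pi_def)
  have "closed {f. Gq n f = 1}"
    by (rule closed_Collect_eq) (auto intro: cont_Gq continuous_intros)
  from compact_Int_closed[OF c this] show ?thesis unfolding e .
qed

lemma Fq_scale: "Fq A n (\<lambda>i. c * f i) = c^2 * Fq A n f"
  unfolding Fq_def
  by (simp add: sum_distrib_left power_mult_distrib mult.left_commute mult.assoc flip: sum_distrib_left)

lemma Gq_scale: "Gq n (\<lambda>i. c * f i) = c^2 * Gq n f"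
  unfolding Gq_def by (simp add: sum_distrib_left power_mult_distrib)

lemma Fq_cong: "(\<And>i. i < n \<Longrightarrow> f i = g i) \<Longrightarrow> Fq A n f = Fq A n g"
  unfolding Fq_def by (auto intro!: sum.cong)
lemma Gq_cong: "(\<And>i. i < n \<Longrightarrow> f i = g i) \<Longrightarrow> Gq n f = Gq n g"
  unfolding Gq_def by (auto intro!: sum.cong)

lemma Gq_nonneg: "Gq n f \<ge> 0" unfolding Gq_def by (auto intro: sum_nonneg)
lemma Fq_nonneg: "Fq A n f \<ge> 0" unfolding Fq_def by (auto intro: sum_nonneg)

lemma Gq_zero: assumes "Gq n f = 0" "i < n" shows "f i = 0"
proof -
  have "\<forall>i\<in>{0..<n}. (f i)^2 = 0" using assms(1) unfolding Gq_def
    by (subst sum_nonneg_eq_0_iff[symmetric]) auto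
  then show ?thesis using assms(2) by auto
qed

lemma Fq_zero_if: assumes "\<And>i. i < n \<Longrightarrow> f i = 0" shows "Fq A n f = 0"
  unfolding Fq_def using assms by auto

lemma exists_min:
  assumes "n > 0"
  shows "\<exists>u. Gq n u = 1 \<and> (\<forall>f. Fq A n u * Gq n f \<le> Fq A n f)"
proof -
  define K where "K = {f. \<forall>i. f i \<in> (if i < n then {-1..1} else {0::real})} \<inter> {f. Gq n f = 1}"
  have "(\<lambda>i. if i = 0 then 1 else 0::real) \<in> K"
    using assms unfolding K_def Gq_def by (auto simp: sum.atLeast_Suc_lessThan)
  hence ne: "K \<noteq> {}" by auto
  obtain u where u: "u \<in> K" and umin: "\<And>y. y \<in> K \<Longrightarrow> Fq A n u \<le> Fq A n y"
    using continuous_attains_inf[OF compact_K[of n, folded K_def] ne cont_Fq] by blast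
  have "Fq A n u * Gq n f \<le> Fq A n f" for f
  proof (cases "Gq n f = 0")
    case True
    then show ?thesis using Fq_nonneg[of A n f] by simp
  next
    case False
    hence gp: "Gq n f > 0" using Gq_nonneg[of n f] by simp
    define c where "c = 1 / sqrt (Gq n f)"
    define g where "g = (\<lambda>i. if i < n then c * f i else 0)"
    have c2: "c^2 * Gq n f = 1" using gp unfolding c_def by (simp add: power_divide)
    have Gg: "Gq n g = 1" using Gq_cong[of n g "\<lambda>i. c * f i"] Gq_scale c2 unfolding g_def by simp
    have "g \<in> K"
    proof -
      have "\<bar>g i\<bar> \<le> 1" if "i < n" for i
      proof -
        have "(g i)^2 \<le> Gq n g" unfolding Gq_def
          using that by (intro member_le_sum) auto
        then have "(g i)^2 \<le> 1^2" using Gg by simp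
        then show ?thesis using abs_le_square_iff[of "g i" 1] by simp
      qed
      then show ?thesis unfolding K_def using Gg by (auto simp: g_def abs_le_iff)
    qed
    then have "Fq A n u \<le> Fq A n g" by (rule umin)
    also have "Fq A n g = c^2 * Fq A n f" using Fq_cong[of n g "\<lambda>i. c * f i"] Fq_scale unfolding g_def by simp
    finally have "Fq A n u * Gq n f \<le> c^2 * Fq A n f * Gq n f"
      using gp by (simp add: mult_right_mono)
    also have "\<dots> = Fq A n f * (c^2 * Gq n f)" by (simp add: algebra_simps)
    finally show ?thesis using c2 by simp
  qed
  then show ?thesis using u unfolding K_def by auto
qed

lemma Fq_expand: "Fq A n (\<lambda>i. u i + e * y i) = Fq A n u
   + 2 * e * (\<Sum>i\<in>{0..<n}. (\<Sum>j\<in>{0..<n}. A $$ (i,j) * u j) * (\<Sum>j\<in>{0..<n}. A $$ (i,j) * y j)) + e^2 * Fq A n y"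
proof -
  have "(\<Sum>j\<in>{0..<n}. A $$ (i,j) * (u j + e * y j)) = (\<Sum>j\<in>{0..<n}. A $$ (i,j) * u j) + e * (\<Sum>j\<in>{0..<n}. A $$ (i,j) * y j)" for i
    by (simp add: algebra_simps sum.distrib sum_distrib_left)
  then show ?thesis unfolding Fq_def
    by (simp add: power2_eq_square algebra_simps sum.distrib sum_distrib_left)
qed

lemma Gq_expand: "Gq n (\<lambda>i. u i + e * y i) = Gq n u + 2 * e * (\<Sum>i\<in>{0..<n}. u i * y i) + e^2 * Gq n y"
  unfolding Gq_def by (simp add: power2_eq_square algebra_simps sum.distrib sum_distrib_left)

lemma quad_zero: fixes a b :: real assumes "\<And>e. 0 \<le> a * e + b * e^2" shows "a = 0"
proof (rule ccontr)
  assume "a \<noteq> 0"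
  define d where "d = \<bar>b\<bar> + 1"
  have d: "d > 0" unfolding d_def by simp
  define e where "e = - a / d"
  have "0 \<le> a * e + b * e^2" by (rule assms)
  also have "a * e + b * e^2 = a^2 * (b - d) / d^2"
    unfolding e_def using d by (simp add: field_simps power2_eq_square)
  also have "\<dots> < 0" using \<open>a \<noteq> 0\<close> d
    by (intro divide_neg_pos mult_pos_neg) (auto simp: d_def)
  finally show False by simp
qed



lemma rayleigh:
  fixes A :: "real mat"
  assumes A: "A \<in> carrier_mat n n" and n: "n > 0"
  shows "\<exists>k. eigenvalue (transpose_mat A * A) k \<and> (\<forall>f. k * Gq n f \<le> Fq A n f)"
proof -
  obtain u where u1: "Gq n u = 1" and umin: "\<And>f. Fq A n u * Gq n f \<le> Fq A n f"
    using exists_min[OF n, of A] by blast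
  define l where "l = Fq A n u"
  define Au where "Au = (\<lambda>i. \<Sum>j\<in>{0..<n}. A $$ (i,j) * u j)"
  have a0: "(\<Sum>i\<in>{0..<n}. Au i * (\<Sum>j\<in>{0..<n}. A $$ (i,j) * y j)) - l * (\<Sum>i\<in>{0..<n}. u i * y i) = 0" for y
  proof -
    have "0 \<le> (2 * ((\<Sum>i\<in>{0..<n}. Au i * (\<Sum>j\<in>{0..<n}. A $$ (i,j) * y j)) - l * (\<Sum>i\<in>{0..<n}. u i * y i))) * e
       + (Fq A n y - l * Gq n y) * e^2" for e
    proof -
      have "l * Gq n (\<lambda>i. u i + e * y i) \<le> Fq A n (\<lambda>i. u i + e * y i)" using umin unfolding l_def by blast
      then show ?thesis unfolding Fq_expand Gq_expand u1 l_def[symmetric] Au_def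
        by (simp add: algebra_simps)
    qed
    from quad_zero[OF this] show ?thesis by simp
  qed
  define w where "w = (\<lambda>j. (\<Sum>i\<in>{0..<n}. A $$ (i,j) * Au i) - l * u j)"
  have "(\<Sum>j\<in>{0..<n}. (w j)^2) = 0"
  proof -
    have "(\<Sum>i\<in>{0..<n}. Au i * (\<Sum>j\<in>{0..<n}. A $$ (i,j) * w j)) = (\<Sum>j\<in>{0..<n}. w j * (\<Sum>i\<in>{0..<n}. A $$ (i,j) * Au i))"
    proof -
      have "(\<Sum>i\<in>{0..<n}. Au i * (\<Sum>j\<in>{0..<n}. A $$ (i,j) * w j)) = (\<Sum>i\<in>{0..<n}. \<Sum>j\<in>{0..<n}. Au i * (A $$ (i,j) * w j))"
        by (simp add: sum_distrib_left)
      also have "\<dots> = (\<Sum>j\<in>{0..<n}. \<Sum>i\<in>{0..<n}. Au i * (A $$ (i,j) * w j))" by (rule sum.swap)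
      also have "\<dots> = (\<Sum>j\<in>{0..<n}. w j * (\<Sum>i\<in>{0..<n}. A $$ (i,j) * Au i))"
        by (simp add: sum_distrib_left mult_ac)
      finally show ?thesis .
    qed
    then have "(\<Sum>j\<in>{0..<n}. (w j)^2) = (\<Sum>i\<in>{0..<n}. Au i * (\<Sum>j\<in>{0..<n}. A $$ (i,j) * w j)) - l * (\<Sum>i\<in>{0..<n}. u i * w i)"
    proof -
      have "(w j)^2 = w j * (\<Sum>i\<in>{0..<n}. A $$ (i,j) * Au i) - l * (u j * w j)" for j
        unfolding w_def by (simp add: power2_eq_square algebra_simps)
      then have "(\<Sum>j\<in>{0..<n}. (w j)^2) = (\<Sum>j\<in>{0..<n}. w j * (\<Sum>i\<in>{0..<n}. A $$ (i,j) * Au i)) - l * (\<Sum>j\<in>{0..<n}. u j * w j)"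
        by (simp add: sum_subtractf sum_distrib_left)
      then show ?thesis using \<open>(\<Sum>i\<in>{0..<n}. Au i * _) = _\<close> by simp
    qed
    then show ?thesis using a0[of w] by simp
  qed
  then have w0: "w j = 0" if "j < n" for j using Gq_zero[of n w j] that unfolding Gq_def by simp
  define v where "v = Matrix.vec n u"
  have ev: "eigenvector (transpose_mat A * A) v l"
    unfolding eigenvector_def
  proof (intro conjI)
    show "v \<in> carrier_vec (dim_row (transpose_mat A * A))" using A unfolding v_def by simp
    show "v \<noteq> 0\<^sub>v (dim_row (transpose_mat A * A))"
    proof
      assume "v = 0\<^sub>v (dim_row (transpose_mat A * A))"
      then have "\<forall>i<n. u i = 0" using A unfolding v_def by (metis carrier_matD(2) index_mult_mat(2) index_transpose_mat(2) index_vec index_zero_vec(1))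
      then have "Gq n u = 0" unfolding Gq_def by simp
      then show False using u1 by simp
    qed
    show "transpose_mat A * A *\<^sub>v v = l \<cdot>\<^sub>v v"
    proof (rule eq_vecI)
      fix j assume j: "j < dim_vec (l \<cdot>\<^sub>v v)"
      then have j': "j < n" unfolding v_def by simp
      have "(transpose_mat A * A *\<^sub>v v) $ j = (\<Sum>i\<in>{0..<n}. A $$ (i,j) * Au i)"
        using A j' unfolding v_def Au_def by (simp add: scalar_prod_def row_def col_def)
      also have "\<dots> = l * u j" using w0[OF j'] unfolding w_def by simp
      finally show "(transpose_mat A * A *\<^sub>v v) $ j = (l \<cdot>\<^sub>v v) $ j" using j' unfolding v_def by simp
    qed (use A in \<open>simp add: v_def\<close>)
  qed
  then show ?thesis using umin unfolding eigenvalue_def l_def by blast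
qed



lemma finite_gram: assumes A: "A \<in> carrier_mat n n" shows "finite (gram_eigenvalues A)"
proof -
  have B: "transpose_mat A * A \<in> carrier_mat n n" using A by simp
  have "char_poly (transpose_mat A * A) \<noteq> 0"
    using degree_monic_char_poly[OF B] by (metis coeff_0 zero_neq_one)
  then have "finite {x. poly (char_poly (transpose_mat A * A)) x = 0}" by (rule poly_roots_finite)
  moreover have "gram_eigenvalues A = {x. poly (char_poly (transpose_mat A * A)) x = 0}"
    unfolding gram_eigenvalues_def using eigenvalue_root_char_poly[OF B] by auto
  ultimately show ?thesis by simp
qed

lemma ssv_le:
  fixes A :: "real mat"
  assumes A: "A \<in> carrier_mat n n" and n: "n > 0" and G: "Gq n f \<ge> 1"
  shows "smallest_sv A \<le> sqrt (Fq A n f)"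
proof -
  obtain k where ev: "eigenvalue (transpose_mat A * A) k" and kb: "\<And>f. k * Gq n f \<le> Fq A n f"
    using rayleigh[OF A n] by blast
  have kin: "k \<in> gram_eigenvalues A" using ev unfolding gram_eigenvalues_def by simp
  have "Min (gram_eigenvalues A) \<le> k" using finite_gram[OF A] kin by simp
  also have "k \<le> Fq A n f"
  proof (cases "k \<ge> 0")
    case True
    then have "k * 1 \<le> k * Gq n f" using G by (intro mult_left_mono) auto
    then show ?thesis using kb[of f] by simp
  next
    case False then show ?thesis using Fq_nonneg[of A n f] by simp
  qed
  finally show ?thesis unfolding smallest_sv_def by simp
qed

definition Md :: "real \<Rightarrow> nat \<Rightarrow> real mat" where
  "Md L n = Matrix.mat n n (\<lambda>(i,j). if i = j then (if i = 0 then 1 else L) else 0)"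

lemma Md_carrier: "Md L n \<in> carrier_mat n n" unfolding Md_def by simp

lemma op_norm_Md: assumes n: "n \<ge> 2" and L: "L \<ge> 1" shows "op_norm (Md L n) = L"
proof -
  define d where "d = (\<lambda>i::nat. if i = 0 then 1 else L)"
  let ?M = "Md L n"
  have Mv: "(transpose_mat ?M * ?M *\<^sub>v v) $ j = (d j)^2 * v $ j" if "v \<in> carrier_vec n" "j < n" for v j
  proof -
    have "(transpose_mat ?M * ?M *\<^sub>v v) $ j = (\<Sum>i\<in>{0..<n}. ?M $$ (i,j) * (\<Sum>k\<in>{0..<n}. ?M $$ (i,k) * v $ k))"
      using that Md_carrier[of L n] by (simp add: scalar_prod_def row_def col_def)
    also have "\<dots> = (\<Sum>i\<in>{0..<n}. if i = j then d j * (d j * v $ j) else 0)"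
    proof (rule sum.cong[OF refl])
      fix i assume i: "i \<in> {0..<n}"
      have "(\<Sum>k\<in>{0..<n}. ?M $$ (i,k) * v $ k) = (\<Sum>k\<in>{0..<n}. if i = k then d i * v $ k else 0)"
        using i unfolding Md_def d_def by (intro sum.cong) auto
      also have "\<dots> = d i * v $ i" using i by simp
      finally show "?M $$ (i,j) * (\<Sum>k\<in>{0..<n}. ?M $$ (i,k) * v $ k) = (if i = j then d j * (d j * v $ j) else 0)"
        using i that unfolding Md_def d_def by auto
    qed
    also have "\<dots> = (d j)^2 * v $ j" using that by (simp add: power2_eq_square)
    finally show ?thesis .
  qed
  have sub: "gram_eigenvalues ?M \<subseteq> {1, L^2}"
  proof
    fix k assume "k \<in> gram_eigenvalues ?M"
    then obtain v where v: "v \<in> carrier_vec n" "v \<noteq> 0\<^sub>v n" "transpose_mat ?M * ?M *\<^sub>v v = k \<cdot>\<^sub>v v"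
      unfolding gram_eigenvalues_def eigenvalue_def eigenvector_def using Md_carrier[of L n] by auto
    obtain j where j: "j < n" "v $ j \<noteq> 0" using v(1,2) by (metis eq_vecI carrier_vecD index_zero_vec)
    have "(d j)^2 * v $ j = k * v $ j" using Mv[OF v(1) j(1)] v(3) j by (metis index_smult_vec(1) carrier_vecD v(1))
    then have "k = (d j)^2" using j(2) by simp
    then show "k \<in> {1, L^2}" unfolding d_def by auto
  qed
  have mem: "L^2 \<in> gram_eigenvalues ?M"
  proof -
    have "eigenvector (transpose_mat ?M * ?M) (unit_vec n 1) (L^2)"
      unfolding eigenvector_def
    proof (intro conjI)
      show "unit_vec n 1 \<in> carrier_vec (dim_row (transpose_mat ?M * ?M))" using Md_carrier[of L n] by simp
      show "unit_vec n 1 \<noteq> 0\<^sub>v (dim_row (transpose_mat ?M * ?M))"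
        using Md_carrier[of L n] n by (metis carrier_matD(2) index_mult_mat(2) index_transpose_mat(2) index_unit_vec(1) index_zero_vec(1) less_le_trans one_less_numeral_iff semiring_norm(76) zero_neq_one)
      show "transpose_mat ?M * ?M *\<^sub>v unit_vec n 1 = L\<^sup>2 \<cdot>\<^sub>v unit_vec n 1"
      proof (rule eq_vecI)
        fix j assume "j < dim_vec (L\<^sup>2 \<cdot>\<^sub>v unit_vec n 1)"
        then have j: "j < n" by simp
        show "(transpose_mat ?M * ?M *\<^sub>v unit_vec n 1) $ j = (L\<^sup>2 \<cdot>\<^sub>v unit_vec n 1) $ j"
          using Mv[OF _ j, of "unit_vec n 1"] j unfolding d_def by (auto simp: unit_vec_def)
      qed (use Md_carrier[of L n] in simp)
    qed
    then show ?thesis unfolding gram_eigenvalues_def eigenvalue_def by blast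
  qed
  have "Max (gram_eigenvalues ?M) = L^2"
  proof (rule Max_eqI)
    show "finite (gram_eigenvalues ?M)" using finite_subset[OF sub] by simp
    show "y \<le> L^2" if "y \<in> gram_eigenvalues ?M" for y
    proof -
      have "y = 1 \<or> y = L^2" using sub that by auto
      moreover have "1 \<le> L^2" using L by (simp add: one_le_power)
      ultimately show ?thesis by auto
    qed
  qed (rule mem)
  then show ?thesis unfolding op_norm_def using L by simp
qed



lemma finite_sign: "finite (sign_mats n)"
proof -
  let ?D = "{0..<n} \<times> {0..<n}"
  have sub: "sign_mats n \<subseteq> (\<lambda>f. Matrix.mat n n f) ` (PiE ?D (\<lambda>_. {1, -1::real}))"
  proof
    fix N assume N: "N \<in> sign_mats n"
    have Nc: "N \<in> carrier_mat n n" and Ne: "\<And>i j. i < n \<Longrightarrow> j < n \<Longrightarrow> N $$ (i,j) = 1 \<or> N $$ (i,j) = -1"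
      using N unfolding sign_mats_def by blast+
    let ?f = "restrict (\<lambda>ij. N $$ ij) ?D"
    have "N = Matrix.mat n n ?f"
    proof (rule eq_matI)
      fix i j assume "i < dim_row (Matrix.mat n n ?f)" "j < dim_col (Matrix.mat n n ?f)"
      then have "i < n" "j < n" by simp_all
      then show "N $$ (i,j) = Matrix.mat n n ?f $$ (i,j)" by simp
    qed (use Nc in simp_all)
    moreover have "?f \<in> PiE ?D (\<lambda>_. {1, -1::real})"
    proof (rule PiE_I)
      fix x assume "x \<in> ?D"
      then obtain i j where x: "x = (i,j)" "i < n" "j < n" by auto
      show "?f x \<in> {1, -1}" using Ne[OF x(2,3)] x(1) x by simp
    qed simp
    ultimately show "N \<in> (\<lambda>f. Matrix.mat n n f) ` (PiE ?D (\<lambda>_. {1, -1::real}))" by (rule image_eqI)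
  qed
  have "finite (PiE ?D (\<lambda>_. {1, -1::real}))" by (rule finite_PiE) auto
  from finite_subset[OF sub finite_imageI[OF this]] show ?thesis .
qed

lemma sign_ne: "sign_mats n \<noteq> {}"
proof -
  have "Matrix.mat n n (\<lambda>_. 1) \<in> sign_mats n" unfolding sign_mats_def by auto
  then show ?thesis by blast
qed

definition flip :: "nat \<Rightarrow> nat \<Rightarrow> nat \<Rightarrow> real mat \<Rightarrow> real mat" where
  "flip n p q N = Matrix.mat n n (\<lambda>(i,j). if (i,j) = (p,q) then - N $$ (i,j) else N $$ (i,j))"

lemma flip_in: assumes "N \<in> sign_mats n" shows "flip n p q N \<in> sign_mats n"
  using assms unfolding sign_mats_def flip_def by auto

lemma flip_flip: assumes "N \<in> sign_mats n" shows "flip n p q (flip n p q N) = N"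
  using assms unfolding sign_mats_def flip_def by (intro eq_matI) auto

lemma flip_idx: assumes "i < n" "j < n" shows "flip n p q N $$ (i,j) = (if (i,j) = (p,q) then - N $$ (i,j) else N $$ (i,j))"
  using assms unfolding flip_def by auto

lemma sum_flip_zero:
  assumes p: "p < n" and q: "q < n" and g: "\<And>N. N \<in> sign_mats n \<Longrightarrow> g (flip n p q N) = g N"
  shows "(\<Sum>N\<in>sign_mats n. N $$ (p,q) * g N) = 0"
proof -
  let ?S = "sign_mats n"
  have "(\<Sum>N\<in>?S. N $$ (p,q) * g N) = (\<Sum>N\<in>?S. - (N $$ (p,q) * g N))"
    by (rule sum.reindex_bij_witness[of _ "flip n p q" "flip n p q"])
       (use flip_flip flip_in g p q in \<open>auto simp: flip_idx\<close>)
  then show ?thesis by (simp add: sum_negf)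
qed

lemma sign_sq: assumes "N \<in> sign_mats n" "i < n" "j < n" shows "N $$ (i,j) * N $$ (i,j) = 1"
proof -
  have "N $$ (i,j) = 1 \<or> N $$ (i,j) = -1" using assms unfolding sign_mats_def by blast
  then show ?thesis by auto
qed

lemma term_sum:
  assumes a: "a < n" and j: "1 \<le> j" "j < n" and k: "1 \<le> k" "k < n"
  shows "(\<Sum>N\<in>sign_mats n. (N $$ (a,j) * N $$ (j,0)) * (N $$ (a,k) * N $$ (k,0)))
     = (if j = k then real (card (sign_mats n)) else 0)"
proof (cases "j = k")
  case True
  have "(N $$ (a,j) * N $$ (j,0)) * (N $$ (a,k) * N $$ (k,0)) = 1" if "N \<in> sign_mats n" for N
  proof -
    have e1: "N $$ (a,j) * N $$ (a,j) = 1" by (rule sign_sq[OF that a j(2)])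
    have e2: "N $$ (j,0) * N $$ (j,0) = 1" by (rule sign_sq[OF that j(2)]) (use j in simp)
    have "(N $$ (a,j) * N $$ (j,0)) * (N $$ (a,k) * N $$ (k,0)) = (N $$ (a,j) * N $$ (a,j)) * (N $$ (j,0) * N $$ (j,0))"
      using True by (simp add: mult_ac)
    then show ?thesis using e1 e2 by simp
  qed
  then show ?thesis using True by simp
next
  case False
  have "(\<Sum>N\<in>sign_mats n. N $$ (a,j) * (N $$ (j,0) * N $$ (a,k) * N $$ (k,0))) = 0"
    by (rule sum_flip_zero) (use a j k False in \<open>auto simp: flip_idx\<close>)
  then show ?thesis using False by (simp add: mult_ac)
qed

definition Pq :: "nat \<Rightarrow> nat \<Rightarrow> real mat \<Rightarrow> real" where
  "Pq n a N = (\<Sum>j\<in>{1..<n}. N $$ (a,j) * N $$ (j,0))"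

definition Qq :: "nat \<Rightarrow> real mat \<Rightarrow> real" where
  "Qq n N = (\<Sum>a\<in>{0..<n}. (Pq n a N)^2)"

lemma sum_Pq_sq: assumes a: "a < n"
  shows "(\<Sum>N\<in>sign_mats n. (Pq n a N)^2) = real (n - 1) * real (card (sign_mats n))"
proof -
  let ?S = "sign_mats n" and ?J = "{1..<n}"
  have "(\<Sum>N\<in>?S. (Pq n a N)^2) = (\<Sum>N\<in>?S. \<Sum>j\<in>?J. \<Sum>k\<in>?J. (N $$ (a,j) * N $$ (j,0)) * (N $$ (a,k) * N $$ (k,0)))"
    unfolding Pq_def power2_eq_square by (simp add: sum_product)
  also have "\<dots> = (\<Sum>j\<in>?J. \<Sum>N\<in>?S. \<Sum>k\<in>?J. (N $$ (a,j) * N $$ (j,0)) * (N $$ (a,k) * N $$ (k,0)))"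
    by (rule sum.swap)
  also have "\<dots> = (\<Sum>j\<in>?J. \<Sum>k\<in>?J. \<Sum>N\<in>?S. (N $$ (a,j) * N $$ (j,0)) * (N $$ (a,k) * N $$ (k,0)))"
    by (intro sum.cong refl sum.swap)
  also have "\<dots> = (\<Sum>j\<in>?J. \<Sum>k\<in>?J. if j = k then real (card ?S) else 0)"
    using a by (intro sum.cong refl term_sum) auto
  also have "\<dots> = real (n - 1) * real (card ?S)" by simp
  finally show ?thesis .
qed

lemma sum_Qq: "(\<Sum>N\<in>sign_mats n. Qq n N) = real n * real (n - 1) * real (card (sign_mats n))"
proof -
  have "(\<Sum>N\<in>sign_mats n. Qq n N) = (\<Sum>a\<in>{0..<n}. \<Sum>N\<in>sign_mats n. (Pq n a N)^2)"
    unfolding Qq_def by (rule sum.swap)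
  also have "\<dots> = (\<Sum>a\<in>{0..<n}. real (n - 1) * real (card (sign_mats n)))"
    by (intro sum.cong refl sum_Pq_sq) auto
  also have "\<dots> = real (card {0..<n}) * (real (n - 1) * real (card (sign_mats n)))" by (rule sum_constant)
  finally show ?thesis by (simp only: card_atLeastLessThan diff_zero mult.assoc)
qed

lemma Qq_nonneg: "Qq n N \<ge> 0" unfolding Qq_def by (auto intro: sum_nonneg)

lemma markov_card:
  assumes n: "n > 0"
  shows "real (card {N\<in>sign_mats n. Qq n N > 8 * real n ^ 2}) * 8 \<le> real (card (sign_mats n))"
proof -
  let ?S = "sign_mats n" and ?B = "{N\<in>sign_mats n. Qq n N > 8 * real n ^ 2}"
  have "real (card ?B) * (8 * real n ^ 2) = (\<Sum>N\<in>?B. 8 * real n ^ 2)" by simp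
  also have "\<dots> \<le> (\<Sum>N\<in>?B. Qq n N)" by (intro sum_mono) auto
  also have "\<dots> \<le> (\<Sum>N\<in>?S. Qq n N)" by (intro sum_mono2 finite_sign Qq_nonneg) auto
  also have "\<dots> = real n * real (n - 1) * real (card ?S)" by (rule sum_Qq)
  also have "\<dots> \<le> real n ^ 2 * real (card ?S)"
    by (intro mult_right_mono) (auto simp: power2_eq_square intro!: mult_left_mono)
  finally have "real (card ?B) * 8 * real n ^ 2 \<le> real (card ?S) * real n ^ 2" by (simp add: mult_ac)
  then show ?thesis using n by simp
qed

lemma half_card:
  assumes n: "n > 0"
  shows "2 * card {N\<in>sign_mats n. N $$ (0,0) = -1} = card (sign_mats n)"
proof -
  let ?S = "sign_mats n" and ?E = "{N\<in>sign_mats n. N $$ (0,0) = -1}" and ?F = "{N\<in>sign_mats n. N $$ (0,0) = 1}"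
  have "card ?E = card ?F"
  proof -
    have "(\<Sum>N\<in>?E. (1::nat)) = (\<Sum>N\<in>?F. 1)"
    proof (rule sum.reindex_bij_witness[of _ "flip n 0 0" "flip n 0 0"])
      show "\<And>a. a \<in> ?F \<Longrightarrow> flip n 0 0 (flip n 0 0 a) = a" using flip_flip by blast
      show "\<And>a. a \<in> ?F \<Longrightarrow> flip n 0 0 a \<in> ?E" using flip_in n by (auto simp: flip_idx)
      show "\<And>a. a \<in> ?E \<Longrightarrow> flip n 0 0 (flip n 0 0 a) = a" using flip_flip by blast
      show "\<And>a. a \<in> ?E \<Longrightarrow> flip n 0 0 a \<in> ?F" using flip_in n by (auto simp: flip_idx)
    qed auto
    then show ?thesis by simp
  qed
  moreover have "?S = ?E \<union> ?F" using n unfolding sign_mats_def by auto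
  moreover have "?E \<inter> ?F = {}" by auto
  moreover have "finite ?E" "finite ?F" using finite_sign by auto
  ultimately show ?thesis using card_Un_disjoint[of ?E ?F] by simp
qed



lemma key_row:
  assumes N: "N \<in> sign_mats n" and N00: "N $$ (0,0) = -1" and a: "a < n" and L: "L > 0"
  shows "(\<Sum>j\<in>{0..<n}. (Md L n + N) $$ (a,j) * (if j = 0 then 1 else - N $$ (j,0) / L)) = - Pq n a N / L"
proof -
  have Nc: "N \<in> carrier_mat n n" using N unfolding sign_mats_def by auto
  have n: "0 < n" using a by simp
  have idx: "(Md L n + N) $$ (a,j) = (if a = j then (if a = 0 then 1 else L) else 0) + N $$ (a,j)" if "j < n" for j
    using Nc a that by (simp add: Md_def)
  have rest: "(\<Sum>j\<in>{1..<n}. (Md L n + N) $$ (a,j) * (if j = 0 then 1 else - N $$ (j,0) / L))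
      = (\<Sum>j\<in>{1..<n}. (if a = j then - N $$ (a,0) else 0)) - Pq n a N / L"
  proof -
    have "(Md L n + N) $$ (a,j) * (if j = 0 then 1 else - N $$ (j,0) / L)
        = (if a = j then - N $$ (a,0) else 0) - N $$ (a,j) * N $$ (j,0) / L" if "j \<in> {1..<n}" for j
      using that L by (auto simp: idx field_simps)
    then have "(\<Sum>j\<in>{1..<n}. (Md L n + N) $$ (a,j) * (if j = 0 then 1 else - N $$ (j,0) / L))
       = (\<Sum>j\<in>{1..<n}. (if a = j then - N $$ (a,0) else 0) - N $$ (a,j) * N $$ (j,0) / L)"
      by (rule sum.cong[OF refl])
    also have "\<dots> = (\<Sum>j\<in>{1..<n}. (if a = j then - N $$ (a,0) else 0)) - Pq n a N / L"
      unfolding Pq_def by (simp add: sum_subtractf sum_divide_distrib)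
    finally show ?thesis .
  qed
  have "(\<Sum>j\<in>{0..<n}. (Md L n + N) $$ (a,j) * (if j = 0 then 1 else - N $$ (j,0) / L))
     = (Md L n + N) $$ (a,0) + (\<Sum>j\<in>{1..<n}. (Md L n + N) $$ (a,j) * (if j = 0 then 1 else - N $$ (j,0) / L))"
  proof -
    have spl: "\<And>g::nat\<Rightarrow>real. sum g {0..<n} = g 0 + sum g {1..<n}" using sum.atLeast_Suc_lessThan[OF n] by simp
    show ?thesis by (subst spl) simp
  qed
  also have "\<dots> = - Pq n a N / L"
    unfolding rest using idx[OF n] a N00 by (cases "a = 0") auto
  finally show ?thesis .
qed

lemma ssv_event:
  assumes N: "N \<in> sign_mats n" and N00: "N $$ (0,0) = -1" and n: "n > 0" and L: "L > 0"
    and Q: "Qq n N \<le> 8 * real n ^ 2"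
  shows "smallest_sv (Md L n + N) \<le> 3 * real n / L"
proof -
  define f where "f = (\<lambda>j. if j = 0 then 1 else - N $$ (j,0) / L)"
  have Nc: "N \<in> carrier_mat n n" using N unfolding sign_mats_def by auto
  have A: "Md L n + N \<in> carrier_mat n n" using Nc Md_carrier by simp
  have G: "Gq n f \<ge> 1"
  proof -
    have "(f 0)^2 \<le> Gq n f" unfolding Gq_def using n by (intro member_le_sum) auto
    then show ?thesis unfolding f_def by simp
  qed
  have F: "Fq (Md L n + N) n f = Qq n N / L^2"
    unfolding Fq_def Qq_def f_def
    using key_row[OF N N00 _ L] by (simp add: power_divide sum_divide_distrib)
  have "smallest_sv (Md L n + N) \<le> sqrt (Qq n N / L^2)" using ssv_le[OF A n G] F by simp
  also have "\<dots> = sqrt (Qq n N) / L" using L by (simp add: real_sqrt_divide)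
  also have "sqrt (Qq n N) \<le> 3 * real n"
  proof -
    have "sqrt (Qq n N) \<le> sqrt ((3 * real n)^2)" using Q by (intro real_sqrt_le_mono) (auto simp: power_mult_distrib intro: order_trans[OF _ mult_right_mono[of 8 9]])
    moreover have "sqrt ((3 * real n)^2) = 3 * real n" by (rule real_sqrt_unique) auto
    ultimately show ?thesis by linarith
  qed
  then have "sqrt (Qq n N) / L \<le> 3 * real n / L" using L by (simp add: divide_right_mono)
  finally show ?thesis .
qed

theorem theorem3p1:
  shows "\<exists>c1 c2 :: real. c1 > 0 \<and> c2 > 0 \<and>
    (\<forall>n :: nat. even n \<and> n > 0 \<longrightarrow>
      (\<forall>L :: real. L \<ge> real n \<longrightarrow>
        (\<exists>M \<in> carrier_mat n n. op_norm M = L \<and>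
           measure_pmf.prob (bernoulli_matrix n)
             {N. smallest_sv (M + N) \<le> c1 * real n / L} \<ge> c2 * real n powr (-1/2))))"
proof -
  have main: "\<forall>n :: nat. even n \<and> n > 0 \<longrightarrow>
      (\<forall>L :: real. L \<ge> real n \<longrightarrow>
        (\<exists>M \<in> carrier_mat n n. op_norm M = L \<and>
           measure_pmf.prob (bernoulli_matrix n)
             {N. smallest_sv (M + N) \<le> 3 * real n / L} \<ge> 3/8 * real n powr (-1/2)))"
  proof (intro allI impI)
    fix n :: nat and L :: real
    assume H: "even n \<and> n > 0" and Ln: "L \<ge> real n"
    have ev: "even n" and n: "n > 0" using H by auto
    have "n \<noteq> 1" using ev by auto
    then have n2: "n \<ge> 2" using n by linarith
    have L1: "L \<ge> 1" using n2 Ln by simp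
    have L0: "L > 0" using L1 by simp
    let ?S = "sign_mats n"
    let ?X = "{N. smallest_sv (Md L n + N) \<le> 3 * real n / L}"
    let ?E = "{N\<in>?S. N $$ (0,0) = -1}" and ?B = "{N\<in>?S. Qq n N > 8 * real n ^ 2}"
    have sub: "?E - ?B \<subseteq> ?S \<inter> ?X"
    proof (rule subsetI)
      fix N assume N: "N \<in> ?E - ?B"
      then have NS: "N \<in> ?S" and N00: "N $$ (0,0) = -1" and NQ: "Qq n N \<le> 8 * real n ^ 2" by auto
      have "smallest_sv (Md L n + N) \<le> 3 * real n / L" by (rule ssv_event[OF NS N00 n L0 NQ])
      then show "N \<in> ?S \<inter> ?X" using NS by simp
    qed
    have fin: "finite ?S" by (rule finite_sign)
    have cardS: "card ?S > 0" using fin sign_ne by (simp add: card_gt_0_iff)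
    have "?E \<subseteq> (?E - ?B) \<union> ?B" by blast
    then have "card ?E \<le> card ((?E - ?B) \<union> ?B)" by (rule card_mono[rotated]) (use fin in simp)
    also have "\<dots> \<le> card (?E - ?B) + card ?B" by (rule card_Un_le)
    finally have c1: "real (card ?E) \<le> real (card (?E - ?B)) + real (card ?B)" by linarith
    have "real (2 * card ?E) = real (card ?S)" using half_card[OF n] by simp
    then have c2: "2 * real (card ?E) = real (card ?S)" by simp
    have c3: "real (card ?B) * 8 \<le> real (card ?S)" by (rule markov_card[OF n])
    have "card (?E - ?B) \<le> card (?S \<inter> ?X)" by (rule card_mono[OF _ sub]) (use fin in simp)
    then have c4: "real (card (?E - ?B)) \<le> real (card (?S \<inter> ?X))" by simp
    from c1 c2 c3 c4 have c5: "3/8 * real (card ?S) \<le> real (card (?S \<inter> ?X))" by linarith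
    have eq: "measure_pmf.prob (bernoulli_matrix n) ?X = real (card (?S \<inter> ?X)) / real (card ?S)"
      unfolding bernoulli_matrix_def by (rule measure_pmf_of_set[OF sign_ne fin])
    have pr: "3/8 \<le> measure_pmf.prob (bernoulli_matrix n) ?X"
      unfolding eq using c5 cardS by (subst le_divide_eq) simp
    have "1 \<le> real n powr (1/2)" using n by (intro ge_one_powr_ge_zero) auto
    then have "1 / real n powr (1/2) \<le> 1" by (simp add: divide_le_eq)
    then have "real n powr (-1/2) \<le> 1" by (simp add: powr_minus_divide)
    then have "3/8 * real n powr (-1/2) \<le> 3/8" by simp
    then have "3/8 * real n powr (-1/2) \<le> measure_pmf.prob (bernoulli_matrix n) ?X" using pr by linarith
    moreover have "op_norm (Md L n) = L" by (rule op_norm_Md[OF n2 L1])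
    ultimately show "\<exists>M \<in> carrier_mat n n. op_norm M = L \<and>
           measure_pmf.prob (bernoulli_matrix n)
             {N. smallest_sv (M + N) \<le> 3 * real n / L} \<ge> 3/8 * real n powr (-1/2)"
      using Md_carrier[of L n] by blast
  qed
  show ?thesis
    by (rule exI[of _ 3], rule exI[of _ "3/8"]) (intro conjI, simp, simp, rule main)
qed


end
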